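(* Let $M>0$, let $\mathcal C$ be a connected component of $\mathbf R^d\setminus\mathcal D_N$, let $\omega_I,\omega_F\in\mathcal C$ and let $\alpha\in C^2([0,L_0],\mathcal C)$ be an embedding with $\alpha(0)=\omega_I$ and $\alpha(L_0)=\omega_F$. Then for every $\eta>0$ there exists a curve $\gamma:[0,L]\to\mathcal C$ which is a $Q_M$-admissible connecting curve between $\omega_I$ and $\omega_F$ and satisfies $\mathrm{dist}(\gamma(s),\alpha([0,L_0]))<\eta$ for all $s\in[0,L]$.
   Context: $\mathcal D_N=\{\omega\in\mathbf R^d:\ \exists(n,l)\in\mathbf Z^{d+1},\ 0<|(n,l)|\le N,\ \omega\cdot n+l=0\}$. For $h=(n,l)\in\mathbf Z^d\times\mathbf Z$ let $E_h=\{\omega\in\mathbf R^d:\ \omega\cdot n+l=0\}$. $S_M$ is the set of $h=(n,l)$ with $n\in\mathbf Z^d\setminus\{0\}$, $l\in\mathbf N$, $0<|h|\le M$, such that $h$ is not of the form $jh'$ with $j\in\mathbf Z$, $|j|\ge2$, $h'\in(\mathbf Z^d\setminus\{0\})\times\mathbf N$. An embedding $\gamma\in C^2([0,L],\mathcal C)$ is a $Q_M$-admissible connecting curve between $\omega_I$ and $\omega_F$ if (a) $\gamma(0)=\omega_I$, $\gamma(L)=\omega_F$, $|\dot\gamma(s)|=1$ for all $s\in(0,L)$; and (b) for all $h=(n,l)\in S_M$ and all $s\in[0,L]$ with $\gamma(s)\in E_h$, one has $n\cdot\dot\gamma(s)\ne0$. *)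

theory Defs
  imports "HOL-Analysis.Analysis"
begin

definition ivec :: "int ^ 'd \<Rightarrow> real ^ 'd" where
  "ivec n = (\<chi> i. real_of_int (n $ i))"

definition hnorm :: "(int ^ 'd::finite) \<times> int \<Rightarrow> real" where
  "hnorm h = sqrt (real_of_int ((\<Sum>i\<in>UNIV. (fst h $ i)^2) + (snd h)^2))"

definition resonant_set :: "real \<Rightarrow> (real ^ 'd::finite) set" where
  "resonant_set N = {\<omega>. \<exists>h :: (int ^ 'd) \<times> int. 0 < hnorm h \<and> hnorm h \<le> N \<and>
        ivec (fst h) \<bullet> \<omega> + real_of_int (snd h) = 0}"

definition E_plane :: "(int ^ 'd::finite) \<times> int \<Rightarrow> (real ^ 'd) set" where
  "E_plane h = {\<omega>. ivec (fst h) \<bullet> \<omega> + real_of_int (snd h) = 0}"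

definition S_set :: "real \<Rightarrow> ((int ^ 'd::finite) \<times> int) set" where
  "S_set M = {h. fst h \<noteq> 0 \<and> snd h \<ge> 0 \<and> 0 < hnorm h \<and> hnorm h \<le> M \<and>
      \<not> (\<exists>(j::int) n' l'. \<bar>j\<bar> \<ge> 2 \<and> n' \<noteq> 0 \<and> l' \<ge> 0 \<and> h = (j *s n', j * l'))}"

definition C2_on :: "(real \<Rightarrow> 'a::real_normed_vector) \<Rightarrow> real set \<Rightarrow> bool" where
  "C2_on f S \<longleftrightarrow> (\<exists>f' f''. (\<forall>t\<in>S. (f has_vector_derivative f' t) (at t within S) \<and>
        (f' has_vector_derivative f'' t) (at t within S)) \<and> continuous_on S f'')"

definition C2_embedding :: "(real \<Rightarrow> 'a::real_normed_vector) \<Rightarrow> real \<Rightarrow> 'a set \<Rightarrow> bool" where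
  "C2_embedding f L C \<longleftrightarrow> C2_on f {0..L} \<and> f ` {0..L} \<subseteq> C \<and> inj_on f {0..L} \<and>
      (\<forall>t\<in>{0..L}. vector_derivative f (at t within {0..L}) \<noteq> 0)"

definition admissible_curve ::
  "real \<Rightarrow> (real ^ 'd::finite) set \<Rightarrow> (real \<Rightarrow> real ^ 'd) \<Rightarrow> real \<Rightarrow> real ^ 'd \<Rightarrow> real ^ 'd \<Rightarrow> bool" where
  "admissible_curve M C \<gamma> L \<omega>I \<omega>F \<longleftrightarrow>
     C2_embedding \<gamma> L C \<and> \<gamma> 0 = \<omega>I \<and> \<gamma> L = \<omega>F \<and>
     (\<forall>s\<in>{0<..<L}. norm (vector_derivative \<gamma> (at s within {0..L})) = 1) \<and>
     (\<forall>h\<in>S_set M. \<forall>s\<in>{0..L}. \<gamma> s \<in> E_plane h \<longrightarrow>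
          ivec (fst h) \<bullet> vector_derivative \<gamma> (at s within {0..L}) \<noteq> 0)"

end

theory Submission imports Defs begin

lemma sard1:
  fixes G :: "real \<Rightarrow> real" and S :: "real set"
  assumes der: "\<And>x. x \<in> S \<Longrightarrow> (G has_real_derivative 0) (at x within S)"
  shows "negligible (G ` S)"
proof -
  define S1 where "S1 = (vec ` S :: (real^1) set)"
  define G1 where "G1 = (\<lambda>y::real^1. (vec (G (y$1)) :: real^1))"
  have "(G1 has_derivative (\<lambda>h. 0)) (at y within S1)" if yS: "y \<in> S1" for y
  proof -
    obtain x where x: "x \<in> S" "y = vec x" using yS S1_def by auto
    have d1: "((\<lambda>y::real^1. y$1) has_derivative (\<lambda>h. h$1)) (at y within S1)"
      by (rule bounded_linear_imp_has_derivative) auto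
    have im: "(\<lambda>y::real^1. y$1) ` S1 = S" unfolding S1_def by (auto simp: image_image)
    have d2: "(G has_derivative (\<lambda>h. 0 * h)) (at (y$1) within (\<lambda>y::real^1. y$1) ` S1)"
    proof -
      have "(G has_derivative (\<lambda>h. 0 * h)) (at x within S)"
        using der[OF x(1)] unfolding has_field_derivative_def by assumption
      moreover have "y$1 = x" using x by simp
      ultimately show ?thesis using im by (simp only:)
    qed
    have d3: "((G \<circ> (\<lambda>y::real^1. y$1)) has_derivative ((\<lambda>h. 0 * h) \<circ> (\<lambda>h. h$1))) (at y within S1)"
      by (rule diff_chain_within[OF d1 d2])
    have d4: "\<And>z T. ((vec :: real \<Rightarrow> real^1) has_derivative vec) (at z within T)"
      by (rule bounded_linear_imp_has_derivative) (simp add: linear_conv_bounded_linear[symmetric])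
    have "(((vec :: real \<Rightarrow> real^1) \<circ> (G \<circ> (\<lambda>y::real^1. y$1))) has_derivative ((vec :: real \<Rightarrow> real^1) \<circ> ((\<lambda>h. 0 * h) \<circ> (\<lambda>h. h$1)))) (at y within S1)"
      by (rule diff_chain_within[OF d3 d4])
    then show ?thesis by (simp add: G1_def o_def vec_0[unfolded zero_vec_def] comp_def)
  qed
  then have "negligible (G1 ` S1)"
    by (intro baby_Sard[where f' = "\<lambda>x h. 0"]) (auto simp: matrix_def zero_vec_def[symmetric])
  then have "negligible ((\<lambda>y::real^1. y$1) ` (G1 ` S1))"
    by (intro negligible_differentiable_image_negligible[where S="G1 ` S1" and f="\<lambda>y::real^1. y$1"]) (auto intro!: bounded_linear_imp_differentiable_on)
  moreover have "(\<lambda>y::real^1. y$1) ` (G1 ` S1) = G ` S"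
    unfolding G1_def S1_def by (auto simp: image_image)
  ultimately show ?thesis by simp
qed


lemma inj_perturb:
  fixes f f' :: "real \<Rightarrow> 'a::real_normed_vector"
  assumes ab: "a \<le> b"
    and der: "\<And>t. t \<in> {a..b} \<Longrightarrow> (f has_vector_derivative f' t) (at t within {a..b})"
    and cont: "continuous_on {a..b} f'"
    and nz: "\<And>t. t \<in> {a..b} \<Longrightarrow> f' t \<noteq> 0"
    and inj: "inj_on f {a..b}"
  obtains \<kappa> where "\<kappa> > 0"
    "\<And>p p'. (\<And>t. t \<in> {a..b} \<Longrightarrow> (p has_vector_derivative p' t) (at t within {a..b})) \<Longrightarrow>
       (\<And>t. t \<in> {a..b} \<Longrightarrow> norm (p' t) \<le> \<kappa>) \<Longrightarrow> (\<And>t. t \<in> {a..b} \<Longrightarrow> norm (p t) \<le> \<kappa>) \<Longrightarrow>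
       inj_on (\<lambda>t. f t + p t) {a..b}"
proof -
  have fcont: "continuous_on {a..b} f"
    using der has_vector_derivative_continuous continuous_on_eq_continuous_within by blast
  have nc: "continuous_on {a..b} (\<lambda>t. norm (f' t))" using cont by (intro continuous_intros)
  obtain t0 where t0: "t0 \<in> {a..b}" "\<And>t. t \<in> {a..b} \<Longrightarrow> norm (f' t0) \<le> norm (f' t)"
    using continuous_attains_inf[OF compact_Icc _ nc] ab by auto
  define m where "m = norm (f' t0)"
  have m: "m > 0" "\<And>t. t \<in> {a..b} \<Longrightarrow> m \<le> norm (f' t)"
    using t0 nz m_def by auto
  have "uniformly_continuous_on {a..b} f'"
    by (rule compact_uniformly_continuous[OF cont compact_Icc])
  then obtain r where r: "r > 0" "\<And>x x'. x \<in> {a..b} \<Longrightarrow> x' \<in> {a..b} \<Longrightarrow> dist x' x < r \<Longrightarrow> dist (f' x') (f' x) < m/2"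
    unfolding uniformly_continuous_on_def using m(1) by (metis half_gt_zero)
  have "\<exists>\<mu>>0. \<forall>s\<in>{a..b}. \<forall>t\<in>{a..b}. r \<le> \<bar>s - t\<bar> \<longrightarrow> \<mu> \<le> norm (f s - f t)"
  proof -
    define K where "K = ({a..b} \<times> {a..b}) \<inter> {z. r \<le> \<bar>fst z - snd z\<bar>}"
    have cK: "compact K" unfolding K_def
      by (intro compact_Int_closed compact_Times compact_Icc closed_Collect_le continuous_intros)
    show ?thesis
    proof (cases "K = {}")
      case True
      then show ?thesis unfolding K_def by (auto intro!: exI[of _ 1])
    next
      case False
      have "continuous_on K (\<lambda>z. norm (f (fst z) - f (snd z)))"
        unfolding K_def
        by (intro continuous_intros continuous_on_compose2[OF fcont]) auto
      then obtain z0 where z0: "z0 \<in> K" "\<And>z. z \<in> K \<Longrightarrow> norm (f (fst z0) - f (snd z0)) \<le> norm (f (fst z) - f (snd z))"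
        using continuous_attains_inf[OF cK False] by blast
      have "fst z0 \<noteq> snd z0" using z0(1) r(1) unfolding K_def by auto
      moreover have z0ab: "fst z0 \<in> {a..b}" "snd z0 \<in> {a..b}" using z0(1) unfolding K_def by (auto simp: mem_Times_iff)
      ultimately have "f (fst z0) \<noteq> f (snd z0)" using inj_onD[OF inj _ z0ab] by blast
      then show ?thesis using z0
        by (intro exI[of _ "norm (f (fst z0) - f (snd z0))"]) (auto simp: K_def)
    qed
  qed
  then obtain \<mu> where mu: "\<mu> > 0" "\<And>s t. s \<in> {a..b} \<Longrightarrow> t \<in> {a..b} \<Longrightarrow> r \<le> \<bar>s - t\<bar> \<Longrightarrow> \<mu> \<le> norm (f s - f t)"
    by blast
  define \<kappa> where "\<kappa> = min (m/4) (\<mu>/4)"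
  show ?thesis
  proof (rule that[of \<kappa>])
    show "\<kappa> > 0" using m mu by (simp add: \<kappa>_def)
    fix p p' :: "real \<Rightarrow> 'a"
    assume pd: "\<And>t. t \<in> {a..b} \<Longrightarrow> (p has_vector_derivative p' t) (at t within {a..b})"
      and pb': "\<And>t. t \<in> {a..b} \<Longrightarrow> norm (p' t) \<le> \<kappa>"
      and pb: "\<And>t. t \<in> {a..b} \<Longrightarrow> norm (p t) \<le> \<kappa>"
    show "inj_on (\<lambda>t. f t + p t) {a..b}"
    proof (rule inj_onI, rule ccontr)
      fix s t assume s: "s \<in> {a..b}" and t: "t \<in> {a..b}" and eq: "f s + p s = f t + p t" and ne: "s \<noteq> t"
      show False
      proof (cases "\<bar>s - t\<bar> < r")
        case True
        define I where "I = {min s t..max s t}"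
        have IS: "I \<subseteq> {a..b}" using s t by (auto simp: I_def)
        define h where "h u = f u - u *\<^sub>R f' t + p u" for u
        have hd: "(h has_derivative (\<lambda>d. d *\<^sub>R (f' u - f' t + p' u))) (at u within I)" if u: "u \<in> I" for u
        proof -
          have "(h has_vector_derivative (f' u - f' t + p' u)) (at u within {a..b})"
            unfolding h_def using IS u
            by (auto intro!: derivative_eq_intros der pd)
          then have "(h has_vector_derivative (f' u - f' t + p' u)) (at u within I)"
            using IS by (rule has_vector_derivative_within_subset)
          then show ?thesis by (simp add: has_vector_derivative_def)
        qed
        have hb: "onorm (\<lambda>d. d *\<^sub>R (f' u - f' t + p' u)) \<le> m/2 + m/4" if u: "u \<in> I" for u
        proof -
          have "onorm (\<lambda>d::real. d *\<^sub>R (f' u - f' t + p' u)) = norm (f' u - f' t + p' u)"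
            using onorm_scaleR_left[of "\<lambda>x::real. x" "f' u - f' t + p' u"] onorm_id[where 'a=real] by simp
          also have "\<dots> \<le> norm (f' u - f' t) + norm (p' u)" by (rule norm_triangle_ineq)
          also have "\<dots> \<le> m/2 + m/4"
          proof -
            have "dist u t < r" using u True by (auto simp: I_def dist_real_def)
            then have "dist (f' u) (f' t) < m/2" using r(2)[of t u] u IS t by auto
            moreover have "norm (p' u) \<le> m/4" using pb'[of u] u IS by (auto simp: \<kappa>_def)
            ultimately show ?thesis by (simp add: dist_norm)
          qed
          finally show ?thesis .
        qed
        have "norm (h s - h t) \<le> (m/2 + m/4) * norm (s - t)"
          by (rule differentiable_bound[OF _ hd hb]) (auto simp: I_def)
        moreover have "h s - h t = - ((s - t) *\<^sub>R f' t)"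
          unfolding h_def using eq by (simp add: algebra_simps)
        moreover have "norm ((s - t) *\<^sub>R f' t) \<ge> \<bar>s - t\<bar> * m"
          using m(2)[OF t] by (simp add: mult_left_mono)
        ultimately have "\<bar>s - t\<bar> * m \<le> (m/2 + m/4) * \<bar>s - t\<bar>"
          by (metis norm_minus_cancel real_norm_def order_trans)
        then have "\<bar>s - t\<bar> * (m/4) \<le> 0" by (simp add: algebra_simps)
        then show False using ne m(1) by (simp add: mult_le_0_iff)
      next
        case False
        then have "\<mu> \<le> norm (f s - f t)" using mu(2) s t by simp
        also have "f s - f t = p t - p s" using eq by (simp add: algebra_simps)
        also have "norm (p t - p s) \<le> norm (p t) + norm (p s)" by (rule norm_triangle_ineq4)
        also have "\<dots> \<le> \<mu>/2" using pb[OF s] pb[OF t] by (simp add: \<kappa>_def)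
        finally show False using mu(1) by simp
      qed
    qed
  qed
qed


lemma arclength_reparam:
  fixes \<beta> \<beta>1 \<beta>2 :: "real \<Rightarrow> 'a::euclidean_space"
  assumes L0: "L0 > 0"
    and d1: "\<And>t. t \<in> {0..L0} \<Longrightarrow> (\<beta> has_vector_derivative \<beta>1 t) (at t within {0..L0})"
    and d2: "\<And>t. t \<in> {0..L0} \<Longrightarrow> (\<beta>1 has_vector_derivative \<beta>2 t) (at t within {0..L0})"
    and c2: "continuous_on {0..L0} \<beta>2"
    and nz: "\<And>t. t \<in> {0..L0} \<Longrightarrow> \<beta>1 t \<noteq> 0"
  obtains L \<rho> where "L > 0" "bij_betw \<rho> {0..L} {0..L0}" "\<rho> 0 = 0" "\<rho> L = L0"
    "C2_on (\<beta> \<circ> \<rho>) {0..L}"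
    "\<And>s. s \<in> {0..L} \<Longrightarrow> ((\<beta> \<circ> \<rho>) has_vector_derivative ((1 / norm (\<beta>1 (\<rho> s))) *\<^sub>R \<beta>1 (\<rho> s))) (at s within {0..L})"
proof -
  have c1: "continuous_on {0..L0} \<beta>1"
    using d2 has_vector_derivative_continuous continuous_on_eq_continuous_within by blast
  define v where "v t = norm (\<beta>1 t)" for t
  have cv: "continuous_on {0..L0} v" unfolding v_def using c1 by (intro continuous_intros)
  have vpos: "v t > 0" if "t \<in> {0..L0}" for t using nz[OF that] by (simp add: v_def)
  define \<sigma> where "\<sigma> u = integral {0..u} v" for u
  have \<sigma>d: "(\<sigma> has_real_derivative v t) (at t within {0..L0})" if "t \<in> {0..L0}" for t
    unfolding has_real_derivative_iff_has_vector_derivative \<sigma>_def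
    by (rule integral_has_vector_derivative[OF cv that])
  have \<sigma>c: "continuous_on {0..L0} \<sigma>"
    using \<sigma>d DERIV_continuous continuous_on_eq_continuous_within by blast
  have mono: "\<sigma> s < \<sigma> t" if st: "s \<in> {0..L0}" "t \<in> {0..L0}" "s < t" for s t
  proof (rule DERIV_pos_imp_increasing_open[OF st(3)])
    fix x assume x: "s < x" "x < t"
    then have "(\<sigma> has_real_derivative v x) (at x)"
      using \<sigma>d[of x] st by (simp add: at_within_Icc_at)
    then show "\<exists>y. DERIV \<sigma> x :> y \<and> 0 < y" using vpos[of x] x st by auto
  next
    show "continuous_on {s..t} \<sigma>" by (rule continuous_on_subset[OF \<sigma>c]) (use st in auto)
  qed
  have \<sigma>0: "\<sigma> 0 = 0" by (simp add: \<sigma>_def)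
  define L where "L = \<sigma> L0"
  have Lpos: "L > 0" using mono[of 0 L0] L0 \<sigma>0 by (simp add: L_def)
  have img: "\<sigma> ` {0..L0} = {0..L}"
  proof
    show "\<sigma> ` {0..L0} \<subseteq> {0..L}"
    proof
      fix y assume "y \<in> \<sigma> ` {0..L0}"
      then obtain t where t: "t \<in> {0..L0}" "y = \<sigma> t" by auto
      have "\<sigma> 0 \<le> \<sigma> t" using mono[of 0 t] t L0 by (cases "t = 0") auto
      moreover have "\<sigma> t \<le> \<sigma> L0" using mono[of t L0] t L0 by (cases "t = L0") auto
      ultimately show "y \<in> {0..L}" using t \<sigma>0 by (simp add: L_def)
    qed
  next
    show "{0..L} \<subseteq> \<sigma> ` {0..L0}"
    proof
      fix y assume "y \<in> {0..L}"
      then obtain x where "0 \<le> x" "x \<le> L0" "\<sigma> x = y"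
        using IVT'[of \<sigma> 0 y L0] \<sigma>0 L0 \<sigma>c by (auto simp: L_def)
      then show "y \<in> \<sigma> ` {0..L0}" by auto
    qed
  qed
  have inj: "inj_on \<sigma> {0..L0}"
  proof (rule inj_onI)
    fix s t assume "s \<in> {0..L0}" "t \<in> {0..L0}" "\<sigma> s = \<sigma> t"
    then show "s = t" using mono[of s t] mono[of t s] by (cases "s < t"; cases "t < s") auto
  qed
  define \<rho> where "\<rho> = inv_into {0..L0} \<sigma>"
  have bij\<sigma>: "bij_betw \<sigma> {0..L0} {0..L}" using inj img by (simp add: bij_betw_def)
  have bij\<rho>: "bij_betw \<rho> {0..L} {0..L0}" unfolding \<rho>_def by (rule bij_betw_inv_into[OF bij\<sigma>])
  have \<rho>\<sigma>: "\<rho> (\<sigma> t) = t" if "t \<in> {0..L0}" for t unfolding \<rho>_def using inj that by (rule inv_into_f_f)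
  have \<sigma>\<rho>: "\<sigma> (\<rho> s) = s" if "s \<in> {0..L}" for s unfolding \<rho>_def using that img by (intro f_inv_into_f) auto
  have \<rho>in: "\<rho> s \<in> {0..L0}" if "s \<in> {0..L}" for s using bij\<rho> that by (auto simp: bij_betw_def)
  have \<rho>img: "\<rho> ` {0..L} = {0..L0}" using bij\<rho> by (simp add: bij_betw_def)
  have \<rho>0: "\<rho> 0 = 0" using \<rho>\<sigma>[of 0] \<sigma>0 L0 by simp
  have \<rho>L: "\<rho> L = L0" using \<rho>\<sigma>[of L0] L0 by (simp add: L_def)
  have \<rho>c: "continuous_on {0..L} \<rho>"
    using continuous_on_inv[OF \<sigma>c compact_Icc] \<rho>\<sigma> img by auto
  have \<rho>d: "(\<rho> has_real_derivative (1 / v (\<rho> s))) (at s within {0..L})" if s: "s \<in> {0..L}" for s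
  proof -
    have vne: "v (\<rho> s) \<noteq> 0" using vpos[OF \<rho>in[OF s]] by simp
    have "(\<rho> has_derivative (*) (1 / v (\<rho> s))) (at (\<sigma> (\<rho> s)) within \<sigma> ` {0..L0})"
    proof (rule has_derivative_inverse_within)
      show "(\<sigma> has_derivative (*) (v (\<rho> s))) (at (\<rho> s) within {0..L0})"
        using \<sigma>d[OF \<rho>in[OF s]] by (simp add: has_field_derivative_def)
      show "continuous (at (\<sigma> (\<rho> s)) within \<sigma> ` {0..L0}) \<rho>"
        using \<rho>c s img \<sigma>\<rho>[OF s] by (simp add: continuous_on_eq_continuous_within)
      show "\<rho> s \<in> {0..L0}" by (rule \<rho>in[OF s])
      show "linear ((*) (1 / v (\<rho> s)))" by (simp add: linear_conv_bounded_linear bounded_linear_mult_right)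
      show "(*) (1 / v (\<rho> s)) \<circ> (*) (v (\<rho> s)) = id" using vne by (auto simp: fun_eq_iff)
      show "\<And>x. x \<in> {0..L0} \<Longrightarrow> \<rho> (\<sigma> x) = x" by (rule \<rho>\<sigma>)
    qed
    then show ?thesis using \<sigma>\<rho>[OF s] img by (simp add: has_field_derivative_def)
  qed
  define x where "x s = \<beta>1 (\<rho> s)" for s
  define x' where "x' s = (1 / v (\<rho> s)) *\<^sub>R \<beta>2 (\<rho> s)" for s
  define nx where "nx s = norm (x s)" for s
  define D where "D s = (x' s \<bullet> x s) / nx s" for s
  define \<gamma>1 where "\<gamma>1 s = inverse (nx s) *\<^sub>R x s" for s
  define \<gamma>2 where "\<gamma>2 s = inverse (nx s) *\<^sub>R x' s + (- (D s * inverse (nx s ^ 2))) *\<^sub>R x s" for s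
  have xne: "x s \<noteq> 0" if "s \<in> {0..L}" for s using nz[OF \<rho>in[OF that]] by (simp add: x_def)
  have \<gamma>d: "((\<beta> \<circ> \<rho>) has_vector_derivative \<gamma>1 s) (at s within {0..L})" if s: "s \<in> {0..L}" for s
  proof -
    have "((\<beta> \<circ> \<rho>) has_vector_derivative ((1 / v (\<rho> s)) *\<^sub>R \<beta>1 (\<rho> s))) (at s within {0..L})"
      by (rule vector_diff_chain_within)
         (use \<rho>d[OF s] d1[OF \<rho>in[OF s]] \<rho>img in \<open>auto simp: has_real_derivative_iff_has_vector_derivative\<close>)
    then show ?thesis by (simp add: \<gamma>1_def nx_def x_def v_def divide_inverse)
  qed
  have xd: "(x has_vector_derivative x' s) (at s within {0..L})" if s: "s \<in> {0..L}" for s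
  proof -
    have "((\<beta>1 \<circ> \<rho>) has_vector_derivative ((1 / v (\<rho> s)) *\<^sub>R \<beta>2 (\<rho> s))) (at s within {0..L})"
      by (rule vector_diff_chain_within)
         (use \<rho>d[OF s] d2[OF \<rho>in[OF s]] \<rho>img in \<open>auto simp: has_real_derivative_iff_has_vector_derivative\<close>)
    then show ?thesis by (simp add: x'_def x_def[abs_def] o_def)
  qed
  have nxd: "(nx has_real_derivative D s) (at s within {0..L})" if s: "s \<in> {0..L}" for s
  proof -
    have "((\<lambda>s. norm (x s)) has_derivative (\<lambda>h. (h *\<^sub>R x' s) \<bullet> sgn (x s))) (at s within {0..L})"
      by (rule has_derivative_compose[OF xd[OF s, unfolded has_vector_derivative_def] has_derivative_norm[OF xne[OF s]]])
    moreover have "(\<lambda>h. (h *\<^sub>R x' s) \<bullet> sgn (x s)) = (*) (D s)"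
      by (auto simp: fun_eq_iff D_def nx_def sgn_div_norm inner_commute divide_inverse)
    ultimately show ?thesis by (simp add: has_field_derivative_def nx_def[abs_def])
  qed
  have nxne: "nx s \<noteq> 0" if "s \<in> {0..L}" for s using xne[OF that] by (simp add: nx_def)
  have \<gamma>1d: "(\<gamma>1 has_vector_derivative \<gamma>2 s) (at s within {0..L})" if s: "s \<in> {0..L}" for s
  proof -
    have "((\<lambda>s. inverse (nx s)) has_real_derivative (- (D s * inverse (nx s ^ Suc (Suc 0))))) (at s within {0..L})"
      by (rule DERIV_inverse_fun[OF nxd[OF s] nxne[OF s]])
    from has_vector_derivative_scaleR[OF this xd[OF s]]
    show ?thesis unfolding \<gamma>1_def \<gamma>2_def by (simp add: numeral_2_eq_2)
  qed
  have cx: "continuous_on {0..L} x" unfolding x_def using continuous_on_compose2[OF c1 \<rho>c] \<rho>img by auto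
  have cb2: "continuous_on {0..L} (\<lambda>s. \<beta>2 (\<rho> s))" using continuous_on_compose2[OF c2 \<rho>c] \<rho>img by auto
  have cvr: "continuous_on {0..L} (\<lambda>s. v (\<rho> s))" using continuous_on_compose2[OF cv \<rho>c] \<rho>img by auto
  have vrne: "\<And>s. s \<in> {0..L} \<Longrightarrow> v (\<rho> s) \<noteq> 0" using vpos \<rho>in by (metis less_irrefl)
  have cx': "continuous_on {0..L} x'" unfolding x'_def using cb2 cvr vrne
    by (intro continuous_intros) auto
  have cnx: "continuous_on {0..L} nx" unfolding nx_def using cx by (intro continuous_intros)
  have cD: "continuous_on {0..L} D" unfolding D_def using cx cx' cnx nxne
    by (intro continuous_intros) auto
  have c\<gamma>2: "continuous_on {0..L} \<gamma>2" unfolding \<gamma>2_def using cx cx' cnx nxne cD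
    by (intro continuous_intros) auto
  have "C2_on (\<beta> \<circ> \<rho>) {0..L}"
    unfolding C2_on_def using \<gamma>d \<gamma>1d c\<gamma>2 by blast
  moreover have "\<And>s. s \<in> {0..L} \<Longrightarrow> \<gamma>1 s = (1 / norm (\<beta>1 (\<rho> s))) *\<^sub>R \<beta>1 (\<rho> s)"
    by (simp add: \<gamma>1_def nx_def x_def divide_inverse)
  ultimately show ?thesis using that[OF Lpos bij\<rho> \<rho>0 \<rho>L] \<gamma>d by metis
qed


lemma finite_hnorm_le: "finite {h :: (int^'d::finite) \<times> int. hnorm h \<le> R}"
proof -
  define K where "K = ceiling R"
  have bnd: "\<bar>z\<bar> \<le> K" if "real_of_int (z^2) \<le> R^2" "0 \<le> R" for z :: int
  proof -
    have "\<bar>real_of_int z\<bar>^2 \<le> R^2" using that by simp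
    then have "\<bar>real_of_int z\<bar> \<le> R" using that(2) by (rule power2_le_imp_le)
    also have "R \<le> real_of_int K" unfolding K_def by (rule le_of_int_ceiling)
    finally show ?thesis by linarith
  qed
  have sub: "{h :: (int^'d::finite) \<times> int. hnorm h \<le> R} \<subseteq> {n. \<forall>i. n$i \<in> {-K..K}} \<times> {-K..K}"
  proof
    fix h :: "(int^'d::finite) \<times> int" assume "h \<in> {h. hnorm h \<le> R}"
    define Sm where "Sm = (\<Sum>i\<in>UNIV. (fst h $ i)^2) + (snd h)^2"
    have Sm0: "0 \<le> Sm" unfolding Sm_def by (intro add_nonneg_nonneg sum_nonneg) auto
    have hr: "sqrt (real_of_int Sm) \<le> R" using \<open>h \<in> _\<close> by (simp add: hnorm_def Sm_def)
    have "0 \<le> sqrt (real_of_int Sm)" using Sm0 by simp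
    then have R0: "0 \<le> R" using hr by linarith
    have "real_of_int Sm = (sqrt (real_of_int Sm))^2" using Sm0 by simp
    also have "\<dots> \<le> R^2" using hr Sm0 by (intro power_mono) auto
    finally have SmR: "real_of_int Sm \<le> R^2" .
    have "(fst h $ i)^2 \<le> Sm" for i
    proof -
      have "(fst h $ i)^2 \<le> (\<Sum>i\<in>UNIV. (fst h $ i)^2)"
        by (rule member_le_sum) auto
      then show ?thesis unfolding Sm_def by (smt (verit) zero_le_power2)
    qed
    then have "\<forall>i. fst h $ i \<in> {-K..K}" using bnd SmR R0
      by (metis atLeastAtMost_iff abs_le_iff of_int_le_iff order_trans minus_le_iff)
    moreover have "(snd h)^2 \<le> Sm" unfolding Sm_def
      by (simp add: sum_nonneg)
    then have "snd h \<in> {-K..K}" using bnd SmR R0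
      by (metis atLeastAtMost_iff abs_le_iff of_int_le_iff order_trans minus_le_iff)
    ultimately show "h \<in> {n. \<forall>i. n$i \<in> {-K..K}} \<times> {-K..K}" by (cases h) auto
  qed
  have "{n :: int^'d. \<forall>i. n$i \<in> {-K..K}} \<subseteq> (\<lambda>f. \<chi> i. f i) ` (PiE UNIV (\<lambda>_. {-K..K}))"
  proof
    fix n :: "int^'d" assume "n \<in> {n. \<forall>i. n$i \<in> {-K..K}}"
    then have "(\<lambda>i. n$i) \<in> PiE UNIV (\<lambda>_. {-K..K})" by auto
    moreover have "n = (\<chi> i. (\<lambda>i. n$i) i)" by simp
    ultimately show "n \<in> (\<lambda>f. \<chi> i. f i) ` (PiE UNIV (\<lambda>_. {-K..K}))" by blast
  qed
  then have "finite {n :: int^'d. \<forall>i. n$i \<in> {-K..K}}"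
    by (rule finite_subset) (auto intro!: finite_imageI finite_PiE)
  then show ?thesis using sub by (meson finite_SigmaI finite_atLeastAtMost_int finite_subset)
qed

lemma closed_resonant: "closed (resonant_set R :: (real^'d::finite) set)"
proof -
  have "resonant_set R = (\<Union>h\<in>{h :: (int^'d) \<times> int. 0 < hnorm h \<and> hnorm h \<le> R}. {\<omega>. ivec (fst h) \<bullet> \<omega> + real_of_int (snd h) = 0})"
    unfolding resonant_set_def by auto blast
  moreover have "finite {h :: (int^'d) \<times> int. 0 < hnorm h \<and> hnorm h \<le> R}"
    by (rule finite_subset[OF _ finite_hnorm_le[of R]]) auto
  ultimately show ?thesis
    by (auto intro!: closed_UN closed_Collect_eq continuous_intros)
qed

lemma finite_S_set: "finite (S_set M :: ((int^'d::finite) \<times> int) set)"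
  by (rule finite_subset[OF _ finite_hnorm_le[of M]]) (auto simp: S_set_def)

lemma ivec_nz: "n \<noteq> 0 \<Longrightarrow> ivec n \<noteq> 0"
  by (auto simp: ivec_def vec_eq_iff)

lemma inner_deriv:
  assumes "(f has_vector_derivative f') F"
  shows "((\<lambda>t. c \<bullet> f t) has_real_derivative (c \<bullet> f')) F"
proof -
  have "((\<lambda>t. c \<bullet> f t) has_derivative (\<lambda>h. c \<bullet> (h *\<^sub>R f'))) F"
    using bounded_linear.has_derivative[OF bounded_linear_inner_right[of c] assms[unfolded has_vector_derivative_def]] .
  moreover have "(\<lambda>h. c \<bullet> (h *\<^sub>R f')) = (*) (c \<bullet> f')" by (auto simp: fun_eq_iff)
  ultimately show ?thesis by (simp add: has_field_derivative_def)
qed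


theorem lemma5p1:
  fixes N :: nat and M :: real and C :: "(real ^ 'd::finite) set"
    and \<omega>I \<omega>F :: "real ^ 'd" and \<alpha> :: "real \<Rightarrow> real ^ 'd" and L0 :: real
  assumes "M > 0"
    and "C \<in> components (UNIV - resonant_set (real N))"
    and "\<omega>I \<in> C" and "\<omega>F \<in> C"
    and "L0 > 0"
    and "C2_embedding \<alpha> L0 C" and "\<alpha> 0 = \<omega>I" and "\<alpha> L0 = \<omega>F"
  shows "\<forall>\<eta>>0. \<exists>\<gamma> L. L > 0 \<and> admissible_curve M C \<gamma> L \<omega>I \<omega>F \<and>
           (\<forall>s\<in>{0..L}. infdist (\<gamma> s) (\<alpha> ` {0..L0}) < \<eta>)"
proof (intro allI impI)
  fix \<eta> :: real assume \<eta>: "\<eta> > 0"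
  note Cc = assms(2) and L0 = assms(5) and emb = assms(6)
  have "closed (resonant_set (real N) :: (real^'d) set)" by (rule closed_resonant)
  then have openC: "open C"
    using open_components[OF _ Cc] by (simp add: open_Diff)
  obtain \<alpha>1 \<alpha>2 where ad1: "\<And>t. t \<in> {0..L0} \<Longrightarrow> (\<alpha> has_vector_derivative \<alpha>1 t) (at t within {0..L0})"
    and ad2: "\<And>t. t \<in> {0..L0} \<Longrightarrow> (\<alpha>1 has_vector_derivative \<alpha>2 t) (at t within {0..L0})"
    and ac2: "continuous_on {0..L0} \<alpha>2"
    using emb unfolding C2_embedding_def C2_on_def by blast
  have aimg: "\<alpha> ` {0..L0} \<subseteq> C" and ainj: "inj_on \<alpha> {0..L0}"
    using emb unfolding C2_embedding_def by auto
  have anz: "\<alpha>1 t \<noteq> 0" if "t \<in> {0..L0}" for t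
  proof -
    have "vector_derivative \<alpha> (at t within {0..L0}) = \<alpha>1 t"
      using vector_derivative_within_cbox[of 0 L0 t \<alpha> "\<alpha>1 t"] L0 that ad1[OF that] by (simp add: cbox_interval)
    then show ?thesis using emb that unfolding C2_embedding_def by auto
  qed
  have ac1: "continuous_on {0..L0} \<alpha>1"
    using ad2 has_vector_derivative_continuous continuous_on_eq_continuous_within by blast
  have ac: "continuous_on {0..L0} \<alpha>"
    using ad1 has_vector_derivative_continuous continuous_on_eq_continuous_within by blast
  have L0le: "0 \<le> L0" using L0 by simp
  from inj_perturb[OF L0le ad1 ac1 anz ainj]
  obtain \<kappa> where \<kappa>: "\<kappa> > 0"
    "\<And>p p'. (\<And>t. t \<in> {0..L0} \<Longrightarrow> (p has_vector_derivative p' t) (at t within {0..L0})) \<Longrightarrow>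
       (\<And>t. t \<in> {0..L0} \<Longrightarrow> norm (p' t) \<le> \<kappa>) \<Longrightarrow> (\<And>t. t \<in> {0..L0} \<Longrightarrow> norm (p t) \<le> \<kappa>) \<Longrightarrow>
       inj_on (\<lambda>t. \<alpha> t + p t) {0..L0}"
    by blast
  have nc: "continuous_on {0..L0} (\<lambda>t. norm (\<alpha>1 t))" using ac1 by (intro continuous_intros)
  obtain t0 where t0: "t0 \<in> {0..L0}" "\<And>t. t \<in> {0..L0} \<Longrightarrow> norm (\<alpha>1 t0) \<le> norm (\<alpha>1 t)"
    using continuous_attains_inf[OF compact_Icc _ nc] L0 by auto
  define m where "m = norm (\<alpha>1 t0)"
  have m: "m > 0" "\<And>t. t \<in> {0..L0} \<Longrightarrow> m \<le> norm (\<alpha>1 t)"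
    using t0 anz m_def by auto
  obtain \<delta> where \<delta>: "\<delta> > 0" "(\<Union>x\<in>\<alpha> ` {0..L0}. ball x \<delta>) \<subseteq> C"
    using compact_subset_open_imp_ball_epsilon_subset[OF compact_continuous_image[OF ac compact_Icc] openC aimg]
    by blast
  have "negligible (\<Union>h\<in>S_set M. {x :: real^'d. ivec (fst h) \<bullet> x = 0})"
    using finite_S_set[of M]
    by (intro negligible_Union) (auto intro!: negligible_hyperplane ivec_nz simp: S_set_def)
  then have "(\<Union>h\<in>S_set M. {x :: real^'d. ivec (fst h) \<bullet> x = 0}) \<noteq> UNIV"
    using non_negligible_UNIV by metis
  then obtain e :: "real^'d" where "e \<notin> (\<Union>h\<in>S_set M. {x :: real^'d. ivec (fst h) \<bullet> x = 0})"
    by blast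
  then have e: "\<And>h. h \<in> S_set M \<Longrightarrow> ivec (fst h) \<bullet> e \<noteq> 0" by blast
  define k where "k h = ivec (fst h) \<bullet> e" for h :: "(int^'d) \<times> int"
  define f where "f h t = ivec (fst h) \<bullet> \<alpha> t + real_of_int (snd h)" for h :: "(int^'d) \<times> int" and t
  define f1 where "f1 h t = ivec (fst h) \<bullet> \<alpha>1 t" for h :: "(int^'d) \<times> int" and t
  define \<psi> where "\<psi> t = t * (L0 - t)" for t :: real
  define \<psi>1 where "\<psi>1 t = L0 - 2 * t" for t :: real
  define G where "G h t = - f h t / (k h * \<psi> t)" for h t
  define crit where "crit h = {t \<in> {0<..<L0}. f1 h t * \<psi> t - f h t * \<psi>1 t = 0}" for h
  define Bad where "Bad h = G h ` crit h \<union> {- f1 h 0 / (k h * L0), f1 h L0 / (k h * L0)}" for h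
  have fd: "(f h has_real_derivative f1 h t) (at t)" if "t \<in> {0<..<L0}" for h t
  proof -
    have "(\<alpha> has_vector_derivative \<alpha>1 t) (at t)"
      using ad1[of t] that by (simp add: at_within_Icc_at)
    from inner_deriv[OF this, of "ivec (fst h)"]
    show ?thesis unfolding f_def[abs_def] f1_def by (auto intro!: derivative_eq_intros)
  qed
  have \<psi>d: "(\<psi> has_real_derivative \<psi>1 t) (at t)" for t
    unfolding \<psi>_def[abs_def] \<psi>1_def by (auto intro!: derivative_eq_intros)
  have negBad: "negligible (Bad h)" if h: "h \<in> S_set M" for h
  proof -
    have "negligible (G h ` crit h)"
    proof (rule sard1)
      fix t assume t: "t \<in> crit h"
      then have t': "t \<in> {0<..<L0}" and cr: "f1 h t * \<psi> t - f h t * \<psi>1 t = 0" by (auto simp: crit_def)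
      have kne: "k h \<noteq> 0" using e[OF h] by (simp add: k_def)
      have \<psi>ne: "\<psi> t \<noteq> 0" using t' by (simp add: \<psi>_def)
      have D1: "((\<lambda>t. - f h t / (k h * \<psi> t)) has_real_derivative
          ((- f1 h t) * (k h * \<psi> t) - (- f h t) * (k h * \<psi>1 t)) / ((k h * \<psi> t) * (k h * \<psi> t))) (at t)"
        by (intro DERIV_divide DERIV_minus DERIV_cmult fd[OF t'] \<psi>d) (use kne \<psi>ne in simp)
      have z: "(- f1 h t) * (k h * \<psi> t) - (- f h t) * (k h * \<psi>1 t) = 0"
      proof -
        have "(- f1 h t) * (k h * \<psi> t) - (- f h t) * (k h * \<psi>1 t) = - k h * (f1 h t * \<psi> t - f h t * \<psi>1 t)"
          by (simp add: algebra_simps)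
        then show ?thesis using cr by simp
      qed
      from D1 have "((\<lambda>t. - f h t / (k h * \<psi> t)) has_real_derivative 0) (at t)"
        unfolding z by simp
      then have "(G h has_real_derivative 0) (at t)"
        by (simp add: G_def[abs_def])
      then show "(G h has_real_derivative 0) (at t within crit h)"
        by (rule has_field_derivative_at_within)
    qed
    then show ?thesis unfolding Bad_def by (simp add: negligible_insert)
  qed
  have negB: "negligible (\<Union>h\<in>S_set M. Bad h)"
    using finite_S_set[of M] negBad by (intro negligible_Union) auto
  define Q where "Q = (L0 * L0 + L0) * norm e + 1"
  have Q: "Q > 0"
  proof -
    have "0 \<le> (L0 * L0 + L0) * norm e" using L0 by simp
    then show ?thesis by (simp add: Q_def)
  qed
  define \<epsilon> where "\<epsilon> = min (min \<kappa> \<delta>) (min \<eta> m) / Q"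
  have \<epsilon>: "\<epsilon> > 0" using \<kappa> \<delta> \<eta> m Q by (simp add: \<epsilon>_def)
  obtain a where a: "0 < a" "a < \<epsilon>" "a \<notin> (\<Union>h\<in>S_set M. Bad h)"
  proof -
    have "\<not> {0<..<\<epsilon>} \<subseteq> (\<Union>h\<in>S_set M. Bad h)"
    proof
      assume "{0<..<\<epsilon>} \<subseteq> (\<Union>h\<in>S_set M. Bad h)"
      then have "negligible {0<..<\<epsilon>}" using negB negligible_subset by blast
      then show False using negligible_interval(2)[of 0 \<epsilon>] \<epsilon> by (simp add: box_real)
    qed
    then obtain x where "x \<in> {0<..<\<epsilon>}" "x \<notin> (\<Union>h\<in>S_set M. Bad h)" by blast
    then show ?thesis using that[of x] by simp
  qed
  have aQ: "a * Q < min (min \<kappa> \<delta>) (min \<eta> m)"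
    using a(2) Q by (simp add: \<epsilon>_def pos_less_divide_eq)
  define p where "p t = (a * \<psi> t) *\<^sub>R e" for t
  define p1 where "p1 t = (a * \<psi>1 t) *\<^sub>R e" for t
  have pb: "norm (p t) \<le> a * Q" if "t \<in> {0..L0}" for t
  proof -
    have "\<bar>\<psi> t\<bar> \<le> L0 * L0" using that L0 unfolding \<psi>_def
      by (auto simp: abs_mult intro!: mult_mono)
    then have "norm (p t) \<le> a * (L0 * L0) * norm e"
      using a(1) by (simp add: p_def abs_mult mult_right_mono)
    also have "\<dots> \<le> a * Q" using a(1) L0 by (simp add: Q_def algebra_simps mult_right_mono)
    finally show ?thesis .
  qed
  have p1b: "norm (p1 t) \<le> a * Q" if "t \<in> {0..L0}" for t
  proof -
    have "\<bar>\<psi>1 t\<bar> \<le> L0" using that L0 unfolding \<psi>1_def by auto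
    then have "norm (p1 t) \<le> a * L0 * norm e"
      using a(1) by (simp add: p1_def abs_mult mult_right_mono)
    also have "\<dots> \<le> a * Q" using a(1) L0 by (simp add: Q_def algebra_simps mult_right_mono)
    finally show ?thesis .
  qed
  define \<beta> where "\<beta> t = \<alpha> t + p t" for t
  define \<beta>1 where "\<beta>1 t = \<alpha>1 t + p1 t" for t
  define \<beta>2 where "\<beta>2 t = \<alpha>2 t + (a * (- 2)) *\<^sub>R e" for t
  have pd: "(p has_vector_derivative p1 t) (at t within {0..L0})" for t
    unfolding p_def[abs_def] p1_def using has_field_derivative_at_within[OF \<psi>d[of t], of "{0..L0}"]
    by (auto intro!: derivative_eq_intros simp: has_real_derivative_iff_has_vector_derivative)
  have p1d: "(p1 has_vector_derivative (a * (- 2)) *\<^sub>R e) (at t within {0..L0})" for t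
    unfolding p1_def[abs_def] \<psi>1_def by (auto intro!: derivative_eq_intros)
  have bd1: "(\<beta> has_vector_derivative \<beta>1 t) (at t within {0..L0})" if "t \<in> {0..L0}" for t
    unfolding \<beta>_def[abs_def] \<beta>1_def using ad1[OF that] pd[of t] by (rule has_vector_derivative_add)
  have bd2: "(\<beta>1 has_vector_derivative \<beta>2 t) (at t within {0..L0})" if "t \<in> {0..L0}" for t
    unfolding \<beta>1_def[abs_def] \<beta>2_def using ad2[OF that] p1d[of t] by (rule has_vector_derivative_add)
  have bc2: "continuous_on {0..L0} \<beta>2" unfolding \<beta>2_def using ac2 by (intro continuous_intros)
  have bnz: "\<beta>1 t \<noteq> 0" if "t \<in> {0..L0}" for t
  proof
    assume "\<beta>1 t = 0"
    then have "\<alpha>1 t = - p1 t" by (simp add: \<beta>1_def eq_neg_iff_add_eq_0)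
    then have "norm (\<alpha>1 t) \<le> a * Q" using p1b[OF that] by simp
    then show False using m(2)[OF that] aQ by linarith
  qed
  have binj: "inj_on \<beta> {0..L0}"
    unfolding \<beta>_def[abs_def]
  proof (rule \<kappa>(2)[of p p1])
    fix t assume t: "t \<in> {0..L0}"
    show "(p has_vector_derivative p1 t) (at t within {0..L0})" by (rule pd)
    show "norm (p1 t) \<le> \<kappa>" using p1b[OF t] aQ by linarith
    show "norm (p t) \<le> \<kappa>" using pb[OF t] aQ by linarith
  qed
  have bclose: "dist (\<beta> t) (\<alpha> t) < min \<delta> \<eta>" if "t \<in> {0..L0}" for t
    using pb[OF that] aQ by (simp add: \<beta>_def dist_norm)
  have bC: "\<beta> t \<in> C" if "t \<in> {0..L0}" for t
    using \<delta>(2) bclose[OF that] that by (force simp: dist_commute)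
  have b0: "\<beta> 0 = \<omega>I" using assms(7) by (simp add: \<beta>_def p_def \<psi>_def)
  have bL: "\<beta> L0 = \<omega>F" using assms(8) by (simp add: \<beta>_def p_def \<psi>_def)
  have btrans: "ivec (fst h) \<bullet> \<beta>1 t \<noteq> 0"
    if h: "h \<in> S_set M" and t: "t \<in> {0..L0}" and E: "\<beta> t \<in> E_plane h" for h t
  proof
    assume g1: "ivec (fst h) \<bullet> \<beta>1 t = 0"
    have kne: "k h \<noteq> 0" using e[OF h] by (simp add: k_def)
    have g0: "f h t + a * \<psi> t * k h = 0"
      using E by (simp add: E_plane_def \<beta>_def p_def f_def k_def inner_add_right algebra_simps)
    have g1': "f1 h t + a * \<psi>1 t * k h = 0"
      using g1 by (simp add: \<beta>1_def p1_def f1_def k_def inner_add_right algebra_simps)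
    have aB: "a \<in> Bad h"
    proof (cases "t = 0")
      case True
      then have "a = - f1 h 0 / (k h * L0)" using g1' kne L0 by (simp add: \<psi>1_def field_simps)
      then show ?thesis by (simp add: Bad_def)
    next
      case False
      show ?thesis
      proof (cases "t = L0")
        case True
        then have "a = f1 h L0 / (k h * L0)" using g1' kne L0 by (simp add: \<psi>1_def field_simps)
        then show ?thesis by (simp add: Bad_def)
      next
        case False
        with \<open>t \<noteq> 0\<close> t have t': "t \<in> {0<..<L0}" by auto
        have \<psi>ne: "\<psi> t \<noteq> 0" using t' by (simp add: \<psi>_def)
        have "f1 h t * \<psi> t - f h t * \<psi>1 t = 0"
        proof -
          have "f1 h t = - (a * \<psi>1 t * k h)" "f h t = - (a * \<psi> t * k h)" using g0 g1' by linarith+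
          then show ?thesis by (simp add: algebra_simps)
        qed
        then have tc: "t \<in> crit h" using t' by (simp add: crit_def)
        have "G h t = a" using g0 kne \<psi>ne by (simp add: G_def field_simps)
        then show ?thesis using tc unfolding Bad_def by (metis UnI1 image_eqI)
      qed
    qed
    then show False using a(3) h by blast
  qed
  obtain L \<rho> where L: "L > 0" and bij\<rho>: "bij_betw \<rho> {0..L} {0..L0}" and \<rho>0: "\<rho> 0 = 0" and \<rho>L: "\<rho> L = L0"
    and C2: "C2_on (\<beta> \<circ> \<rho>) {0..L}"
    and gd: "\<And>s. s \<in> {0..L} \<Longrightarrow> ((\<beta> \<circ> \<rho>) has_vector_derivative ((1 / norm (\<beta>1 (\<rho> s))) *\<^sub>R \<beta>1 (\<rho> s))) (at s within {0..L})"
    using arclength_reparam[of L0 \<beta> \<beta>1 \<beta>2] L0 bd1 bd2 bc2 bnz by metis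
  have \<rho>in: "\<rho> s \<in> {0..L0}" if "s \<in> {0..L}" for s using bij\<rho> that by (auto simp: bij_betw_def)
  have vd: "vector_derivative (\<beta> \<circ> \<rho>) (at s within {0..L}) = (1 / norm (\<beta>1 (\<rho> s))) *\<^sub>R \<beta>1 (\<rho> s)"
    if "s \<in> {0..L}" for s
    using vector_derivative_within_cbox[of 0 L s "\<beta> \<circ> \<rho>"] L that gd[OF that] by (simp add: cbox_interval)
  have unit: "norm (vector_derivative (\<beta> \<circ> \<rho>) (at s within {0..L})) = 1" if "s \<in> {0..L}" for s
    using vd[OF that] bnz[OF \<rho>in[OF that]] by simp
  show "\<exists>\<gamma> L. L > 0 \<and> admissible_curve M C \<gamma> L \<omega>I \<omega>F \<and>
           (\<forall>s\<in>{0..L}. infdist (\<gamma> s) (\<alpha> ` {0..L0}) < \<eta>)"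
  proof (intro exI conjI)
    show "L > 0" by (rule L)
    show "admissible_curve M C (\<beta> \<circ> \<rho>) L \<omega>I \<omega>F"
      unfolding admissible_curve_def C2_embedding_def
    proof (intro conjI ballI impI)
      show "C2_on (\<beta> \<circ> \<rho>) {0..L}" by (rule C2)
      show "(\<beta> \<circ> \<rho>) ` {0..L} \<subseteq> C" using bC \<rho>in by auto
      show "inj_on (\<beta> \<circ> \<rho>) {0..L}"
        using bij\<rho> binj by (auto simp: bij_betw_def intro: comp_inj_on)
      show "vector_derivative (\<beta> \<circ> \<rho>) (at t within {0..L}) \<noteq> 0" if "t \<in> {0..L}" for t
        using unit[OF that] by auto
      show "(\<beta> \<circ> \<rho>) 0 = \<omega>I" using b0 \<rho>0 by simp
      show "(\<beta> \<circ> \<rho>) L = \<omega>F" using bL \<rho>L by simp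
      show "norm (vector_derivative (\<beta> \<circ> \<rho>) (at s within {0..L})) = 1" if "s \<in> {0<..<L}" for s
        using unit that by auto
      fix h s assume h: "h \<in> S_set M" and s: "s \<in> {0..L}" and E: "(\<beta> \<circ> \<rho>) s \<in> E_plane h"
      have "ivec (fst h) \<bullet> \<beta>1 (\<rho> s) \<noteq> 0" using btrans[OF h \<rho>in[OF s]] E by simp
      then show "ivec (fst h) \<bullet> vector_derivative (\<beta> \<circ> \<rho>) (at s within {0..L}) \<noteq> 0"
        using vd[OF s] bnz[OF \<rho>in[OF s]] by simp
    qed
    show "\<forall>s\<in>{0..L}. infdist ((\<beta> \<circ> \<rho>) s) (\<alpha> ` {0..L0}) < \<eta>"
    proof
      fix s assume s: "s \<in> {0..L}"
      have "infdist ((\<beta> \<circ> \<rho>) s) (\<alpha> ` {0..L0}) \<le> dist (\<beta> (\<rho> s)) (\<alpha> (\<rho> s))"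
        using \<rho>in[OF s] by (simp add: infdist_le)
      also have "\<dots> < \<eta>" using bclose[OF \<rho>in[OF s]] by simp
      finally show "infdist ((\<beta> \<circ> \<rho>) s) (\<alpha> ` {0..L0}) < \<eta>" .
    qed
  qed
qed

end
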